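(* Let $G$ be a non-discrete, torsion-free locally compact abelian group. Then $G_{op}\neq 0$.
   Context: A subgroup $H$ of an abelian group $G$ is pure if $nH=H\cap nG$ for every positive integer $n$. For an LCA group $G$, $G_{op}$ (the $OP$ subgroup of $G$) denotes the intersection of all open pure subgroups of $G$. *)

theory Defs
  imports "HOL-Analysis.Analysis"
begin

primrec nsmul :: "nat \<Rightarrow> 'a::ab_group_add \<Rightarrow> 'a" where
  "nsmul 0 x = 0"
| "nsmul (Suc n) x = x + nsmul n x"

definition LCA_group :: "'a::{ab_group_add, t2_space} itself \<Rightarrow> bool" where
  "LCA_group _ \<longleftrightarrow>
     continuous_on UNIV (\<lambda>p::'a \<times> 'a. fst p + snd p) \<and>
     continuous_on UNIV (uminus :: 'a \<Rightarrow> 'a) \<and>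
     locally_compact_space (euclidean :: 'a topology)"

definition subgroup_add :: "'a::ab_group_add set \<Rightarrow> bool" where
  "subgroup_add H \<longleftrightarrow> 0 \<in> H \<and> (\<forall>x\<in>H. \<forall>y\<in>H. x + y \<in> H) \<and> (\<forall>x\<in>H. - x \<in> H)"

definition pure_subgroup :: "'a::ab_group_add set \<Rightarrow> bool" where
  "pure_subgroup H \<longleftrightarrow> subgroup_add H \<and>
     (\<forall>n::nat. n > 0 \<longrightarrow> nsmul n ` H = H \<inter> nsmul n ` UNIV)"

definition torsion_free :: "'a::ab_group_add itself \<Rightarrow> bool" where
  "torsion_free _ \<longleftrightarrow> (\<forall>(x::'a) (n::nat). n > 0 \<longrightarrow> nsmul n x = 0 \<longrightarrow> x = 0)"

definition G_op :: "'a::{ab_group_add, topological_space} set" where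
  "G_op = \<Inter> {H. open H \<and> pure_subgroup H}"

end

theory Submission
  imports Defs
begin

lemma nsmul_add: "nsmul (a + b) x = nsmul a x + nsmul b (x::'a::ab_group_add)"
  by (induction a) (auto simp: algebra_simps)

lemma nsmul_diff: "nsmul n (a - b) = nsmul n a - nsmul n (b::'a::ab_group_add)"
  by (induction n) (auto simp: algebra_simps)

lemma transl_open:
  fixes S :: "'a::{ab_group_add, topological_space} set"
  assumes add: "continuous_on UNIV (\<lambda>p::'a \<times> 'a. fst p + snd p)" and S: "open S"
  shows "open ((\<lambda>y. y + a) -` S)"
proof -
  have "continuous_on UNIV (\<lambda>y::'a. (y, a))"
    by (intro continuous_on_Pair continuous_on_id continuous_on_const)
  then have "continuous_on UNIV ((\<lambda>p::'a \<times> 'a. fst p + snd p) \<circ> (\<lambda>y. (y, a)))"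
    by (rule continuous_on_compose[OF _ continuous_on_subset[OF add]]) auto
  then have "continuous_on UNIV (\<lambda>y. y + a)" by (simp add: o_def)
  then show ?thesis using S open_vimage by blast
qed

lemma open_subgroup_closed:
  fixes H :: "'a::{ab_group_add, topological_space} set"
  assumes add: "continuous_on UNIV (\<lambda>p::'a \<times> 'a. fst p + snd p)"
    and H: "open H" "subgroup_add H"
  shows "closed H"
proof -
  have "- H = (\<Union>a\<in>-H. (\<lambda>y. y + (- a)) -` H)"
  proof safe
    fix x assume "x \<notin> H"
    moreover have "x + - x \<in> H" using H(2) by (simp add: subgroup_add_def)
    ultimately show "x \<in> (\<Union>a\<in>-H. (\<lambda>y. y + (- a)) -` H)" by blast
  next
    fix x a assume "a \<notin> H" "x + - a \<in> H" "x \<in> H"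
    then have "- (x + - a) + x \<in> H" using H(2) unfolding subgroup_add_def by blast
    then show False using \<open>a \<notin> H\<close> by simp
  qed
  moreover have "open (\<Union>a\<in>-H. (\<lambda>y. y + (- a)) -` H)"
    using transl_open[OF add H(1)] by blast
  ultimately show ?thesis by (simp add: closed_def)
qed

theorem theorem13:
  assumes "LCA_group TYPE('a::{ab_group_add, t2_space})"
    and "\<not> (\<forall>S::'a set. open S)"
    and "torsion_free TYPE('a)"
  shows "(G_op :: 'a set) \<noteq> {0}"
proof
  assume Gop: "(G_op :: 'a set) = {0}"
  have add: "continuous_on UNIV (\<lambda>p::'a \<times> 'a. fst p + snd p)"
    and lc: "locally_compact_space (euclidean :: 'a topology)"
    using assms(1) by (auto simp: LCA_group_def)
  have tf: "\<And>(x::'a) n. n > 0 \<Longrightarrow> nsmul n x = 0 \<Longrightarrow> x = 0"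
    using assms(3) by (auto simp: torsion_free_def)
  have "\<exists>U K. openin euclidean U \<and> compactin euclidean K \<and> (0::'a) \<in> U \<and> U \<subseteq> K"
    using lc unfolding locally_compact_space_def by simp
  then obtain W C :: "'a set" where W: "open W" "compact C" "0 \<in> W" "W \<subseteq> C"
    unfolding open_openin[symmetric] compactin_euclidean_iff by blast
  define HH where "HH y = (SOME H::'a set. open H \<and> pure_subgroup H \<and> y \<notin> H)" for y :: 'a
  have HH: "open (HH y) \<and> pure_subgroup (HH y) \<and> y \<notin> HH y" if "y \<noteq> 0" for y :: 'a
  proof -
    have "y \<notin> (G_op::'a set)" using that by (subst Gop) simp
    then have "\<exists>H::'a set. open H \<and> pure_subgroup H \<and> y \<notin> H" by (auto simp: G_op_def)
    then show ?thesis unfolding HH_def by (rule someI_ex)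
  qed
  have cmp: "compact (C \<inter> - W)" using W by (intro compact_Int_closed) auto
  have nz: "y \<noteq> 0" if "y \<in> C \<inter> - W" for y using that W by auto
  have "\<And>y. y \<in> C \<inter> - W \<Longrightarrow> open (- HH y)"
    using HH nz open_subgroup_closed[OF add] by (auto simp: pure_subgroup_def)
  moreover have "C \<inter> - W \<subseteq> (\<Union>y\<in>C \<inter> - W. - HH y)" using HH nz by blast
  ultimately obtain T where T: "T \<subseteq> C \<inter> - W" "finite T" "C \<inter> - W \<subseteq> (\<Union>y\<in>T. - HH y)"
    by (rule compactE_image[OF cmp, of "C \<inter> - W" "\<lambda>y. - HH y"])
  have Tprop: "open (HH y) \<and> pure_subgroup (HH y)" if "y \<in> T" for y
    using HH[of y] nz[of y] T(1) that by blast
  define H0 where "H0 = (\<Inter>y\<in>T. HH y)"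
  have H0open: "open H0" unfolding H0_def using T(2) Tprop by (intro open_INT) auto
  have H0sub: "subgroup_add H0"
    using Tprop unfolding H0_def subgroup_add_def pure_subgroup_def by blast
  have H0C: "H0 \<inter> C \<subseteq> W" using T(3) unfolding H0_def by blast
  define U where "U = H0 \<inter> C"
  have Uopen: "open U"
  proof -
    have "U = H0 \<inter> W" using H0C W unfolding U_def by blast
    then show ?thesis using H0open W by auto
  qed
  have Ucomp: "compact U" unfolding U_def
    using compact_Int_closed[OF W(2) open_subgroup_closed[OF add H0open H0sub]] by (simp add: Int_commute)
  have U0: "0 \<in> U" using H0sub W unfolding U_def subgroup_add_def by auto
  \<comment> \<open>tube lemma\<close>
  have ex: "\<forall>u\<in>U. \<exists>p. open (fst p) \<and> open (snd p) \<and> u \<in> fst p \<and> (0::'a) \<in> snd p \<and> fst p \<times> snd p \<subseteq> (\<lambda>p::'a\<times>'a. fst p + snd p) -` U"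
  proof
    fix u assume "u \<in> U"
    have "open ((\<lambda>p::'a\<times>'a. fst p + snd p) -` U)" using open_vimage[OF Uopen add] .
    moreover have "(u, 0) \<in> (\<lambda>p::'a\<times>'a. fst p + snd p) -` U" using \<open>u \<in> U\<close> by simp
    ultimately obtain A B where "open A" "open B" "(u, 0) \<in> A \<times> B" "A \<times> B \<subseteq> (\<lambda>p::'a\<times>'a. fst p + snd p) -` U"
      by (rule open_prod_elim)
    then show "\<exists>p. open (fst p) \<and> open (snd p) \<and> u \<in> fst p \<and> (0::'a) \<in> snd p \<and> fst p \<times> snd p \<subseteq> (\<lambda>p::'a\<times>'a. fst p + snd p) -` U"
      by (intro exI[of _ "(A, B)"]) auto
  qed
  obtain g where g: "\<forall>u\<in>U. open (fst (g u)) \<and> open (snd (g u)) \<and> u \<in> fst (g u) \<and> (0::'a) \<in> snd (g u) \<and> fst (g u) \<times> snd (g u) \<subseteq> (\<lambda>p::'a\<times>'a. fst p + snd p) -` U"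
    using bchoice[OF ex] by blast
  define AA where "AA u = fst (g u)" for u
  define BB where "BB u = snd (g u)" for u
  have AB: "\<And>u. u \<in> U \<Longrightarrow> open (AA u) \<and> open (BB u) \<and> u \<in> AA u \<and> 0 \<in> BB u
       \<and> AA u \<times> BB u \<subseteq> (\<lambda>p. fst p + snd p) -` U"
    using g unfolding AA_def BB_def by blast
  obtain T2 where T2: "T2 \<subseteq> U" "finite T2" "U \<subseteq> (\<Union>u\<in>T2. AA u)"
    using compactE_image[OF Ucomp, of U AA] AB by blast
  define N where "N = (\<Inter>u\<in>T2. BB u)"
  have Nopen: "open N" unfolding N_def using T2 AB by (intro open_INT) auto
  have N0: "0 \<in> N" unfolding N_def using T2 AB by auto
  have UN: "u + z \<in> U" if uz: "u \<in> U" "z \<in> N" for u z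
  proof -
    obtain t where t: "t \<in> T2" "u \<in> AA t" using T2 uz by blast
    then have "z \<in> BB t" using uz unfolding N_def by blast
    moreover have "AA t \<times> BB t \<subseteq> (\<lambda>p. fst p + snd p) -` U" using AB[of t] t T2 by blast
    ultimately have "(u, z) \<in> (\<lambda>p. fst p + snd p) -` U" using t by blast
    then show ?thesis by simp
  qed
  have "\<exists>x\<in>N. x \<noteq> 0"
  proof (rule ccontr)
    assume "\<not> ?thesis"
    then have "N = {0}" using N0 by auto
    then have o0: "open {0::'a}" using Nopen by simp
    have "open S" for S :: "'a set"
    proof -
      have "S = (\<Union>s\<in>S. (\<lambda>y. y + (- s)) -` {0})" by auto
      moreover have "open (\<Union>s\<in>S. (\<lambda>y. y + (- s)) -` {0})"
        using transl_open[OF add o0] by blast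
      ultimately show ?thesis by simp
    qed
    then show False using assms(2) by blast
  qed
  then obtain x where x: "x \<in> N" "x \<noteq> 0" by blast
  have mult: "nsmul n x \<in> U" for n
  proof (induction n)
    case 0 then show ?case using U0 by simp
  next
    case (Suc n)
    have "nsmul n x + x \<in> U" using UN[OF Suc x(1)] .
    then show ?case by (simp add: add.commute)
  qed
  have "x \<in> H" if H: "open H" "pure_subgroup H" for H
  proof -
    have Hs: "subgroup_add H" using H by (simp add: pure_subgroup_def)
    have "\<And>u. u \<in> U \<Longrightarrow> open ((\<lambda>y. y + (- u)) -` H)" using transl_open[OF add H(1)] by blast
    moreover have "U \<subseteq> (\<Union>u\<in>U. (\<lambda>y. y + (- u)) -` H)" using Hs by (auto simp: subgroup_add_def)
    ultimately obtain T3 where T3: "T3 \<subseteq> U" "finite T3" "U \<subseteq> (\<Union>u\<in>T3. (\<lambda>y. y + (- u)) -` H)"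
      by (rule compactE_image[OF Ucomp, of U "\<lambda>u. (\<lambda>y. y + (- u)) -` H"])
    define f where "f n = (SOME t. t \<in> T3 \<and> nsmul n x + - t \<in> H)" for n
    have f: "f n \<in> T3 \<and> nsmul n x + - f n \<in> H" for n
    proof -
      have "\<exists>t. t \<in> T3 \<and> nsmul n x + - t \<in> H" using T3 mult[of n] by blast
      then show ?thesis unfolding f_def by (rule someI_ex)
    qed
    have "\<not> inj_on f {0..card T3}"
    proof
      assume "inj_on f {0..card T3}"
      then have "card {0..card T3} \<le> card T3" using card_inj_on_le f T3(2) by blast
      then show False by simp
    qed
    then obtain i j where ij: "i \<noteq> j" "f i = f j" unfolding inj_on_def by blast
    have key: "\<exists>m>0. nsmul m x \<in> H" if "a < b" "f a = f b" for a b
    proof -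
      have "nsmul b x + - f b + - (nsmul a x + - f a) \<in> H"
        using f[of a] f[of b] Hs unfolding subgroup_add_def by blast
      moreover have "nsmul b x = nsmul (b - a) x + nsmul a x"
        using nsmul_add[of "b-a" a x] that by simp
      ultimately have "nsmul (b - a) x \<in> H" using that by (simp add: algebra_simps)
      then show ?thesis using that by (intro exI[of _ "b-a"]) auto
    qed
    obtain m where m: "m > 0" "nsmul m x \<in> H"
      using ij key by (metis linorder_neqE_nat)
    have eq: "nsmul m ` H = H \<inter> nsmul m ` UNIV" using H(2) m(1) unfolding pure_subgroup_def by blast
    have "nsmul m x \<in> H \<inter> nsmul m ` UNIV" using m(2) by blast
    then have "nsmul m x \<in> nsmul m ` H" by (simp only: eq)
    then obtain h where h: "h \<in> H" "nsmul m x = nsmul m h" by blast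
    then have "nsmul m (x - h) = 0" by (simp add: nsmul_diff)
    then have "x - h = 0" by (rule tf[OF m(1)])
    then have "x = h" by simp
    then show ?thesis using h by simp
  qed
  then have "x \<in> G_op" by (auto simp: G_op_def)
  then show False using x by (subst (asm) Gop) simp
qed

end
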